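(* For every test-fee structure and threshold $(G,\phi,\tau)$ satisfying (w-P) and (w-HE), there exists a sequence of test-fee structures and thresholds $(G^n,\phi^n,\tau^n)_{n\ge1}$ such that (i) each $(G^n,\phi^n,\tau^n)$ satisfies (P) and (HE), (ii) $G^n\to G$ weakly and $\phi^n\to\phi$, and (iii) $\hat R(G,\phi,\tau)\le\lim_{n\to\infty}\hat R(G^n,\phi^n,\tau^n)$.
   Context: The asset value $\theta\sim F$ with support in $[\underline{\theta},\overline{\theta}]$ ($0\le\underline{\theta}<\overline{\theta}<\infty$ the extreme support points) and mean $\mu$. A test-fee structure $(G,\phi)$ consists of a CDF $G$ that is a mean-preserving contraction of $F$ (the score distribution of an unbiased test) and fees $\phi=(\phi_t,\phi_d)\in\mathbb{R}^2$ (testing, disclosure). Let $\underline{s}_G$ be the lowest support point of $G$ and $\hat R(G,\phi,\tau)=\phi_t+\phi_d(1-G(\tau))$. Constraints: (P) $\phi_t<\int_{\mu+\phi_d}^{\overline{\theta}}[s-(\mu+\phi_d)]dG(s)$; (w-P) the same with $\le$; (HE) $\tau\ge\underline{s}_G$, $\tau-\phi_d=E_G[s\mid s\le\tau]$ and $\tau'-\phi_d>E_G[s\mid s\le\tau']$ for all $\tau'>\tau$; (w-HE) $\tau-\phi_d=E_G[s\mid s\le\tau]$ and $\tau'-\phi_d\ge E_G[s\mid s\le\tau']$ for all $\tau'>\tau$. *)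

theory Defs
  imports "HOL-Probability.Probability"
begin

definition is_dist :: "real measure \<Rightarrow> bool" where
  "is_dist G \<longleftrightarrow> prob_space G \<and> sets G = sets borel"

definition mean :: "real measure \<Rightarrow> real" where
  "mean G = (\<integral>s. s \<partial>G)"

text \<open>G is a mean-preserving contraction of F (F is a mean-preserving spread of G):
  equal means and integrated CDF of G below integrated CDF of F everywhere.\<close>
definition mpc :: "real measure \<Rightarrow> real measure \<Rightarrow> bool" where
  "mpc G F \<longleftrightarrow> is_dist G \<and> is_dist F \<and> integrable G (\<lambda>s. s) \<and> integrable F (\<lambda>s. s)
     \<and> mean G = mean F
     \<and> (\<forall>x. (\<integral>t\<in>{..x}. cdf G t \<partial>lborel) \<le> (\<integral>t\<in>{..x}. cdf F t \<partial>lborel))"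

definition low_supp :: "real measure \<Rightarrow> real" where
  "low_supp G = Inf {x. cdf G x > 0}"

text \<open>Conditional mean E_G[s | s \<le> tau]; when G(tau) = 0 (only possible for
  tau \<le> lowest support point) we use the limit value, the lowest support point.\<close>
definition cond_mean_below :: "real measure \<Rightarrow> real \<Rightarrow> real" where
  "cond_mean_below G tau =
     (if cdf G tau > 0 then (\<integral>s\<in>{..tau}. s \<partial>G) / cdf G tau else low_supp G)"

definition Rhat :: "real measure \<Rightarrow> real \<Rightarrow> real \<Rightarrow> real \<Rightarrow> real" where
  "Rhat G phit phid tau = phit + phid * (1 - cdf G tau)"

definition cond_P :: "real \<Rightarrow> real \<Rightarrow> real measure \<Rightarrow> real \<Rightarrow> real \<Rightarrow> bool" where
  "cond_P mu thi G phit phid \<longleftrightarrow>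
     phit < (\<integral>s\<in>{mu + phid..thi}. (s - (mu + phid)) \<partial>G)"

definition cond_wP :: "real \<Rightarrow> real \<Rightarrow> real measure \<Rightarrow> real \<Rightarrow> real \<Rightarrow> bool" where
  "cond_wP mu thi G phit phid \<longleftrightarrow>
     phit \<le> (\<integral>s\<in>{mu + phid..thi}. (s - (mu + phid)) \<partial>G)"

definition cond_HE :: "real measure \<Rightarrow> real \<Rightarrow> real \<Rightarrow> bool" where
  "cond_HE G phid tau \<longleftrightarrow> tau \<ge> low_supp G \<and> tau - phid = cond_mean_below G tau
     \<and> (\<forall>tau'>tau. tau' - phid > cond_mean_below G tau')"

text \<open>Weak HE; the requirement tau \<ge> lowest support point is part of the conditional
  mean being defined.\<close>
definition cond_wHE :: "real measure \<Rightarrow> real \<Rightarrow> real \<Rightarrow> bool" where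
  "cond_wHE G phid tau \<longleftrightarrow> tau \<ge> low_supp G \<and> tau - phid = cond_mean_below G tau
     \<and> (\<forall>tau'>tau. tau' - phid \<ge> cond_mean_below G tau')"

end

theory Submission
  imports Defs
begin

lemma intg_ind:
  assumes "real_distribution G" "integrable G (\<lambda>s. s)"
  shows "integrable G (\<lambda>s. indicator {..t} s * (s - a))"
proof -
  interpret real_distribution G by fact
  have "integrable G (\<lambda>s. s - a)" using assms(2) by auto
  then show ?thesis using integrable_real_mult_indicator[of "{..t}" G "\<lambda>s. s - a"] by (simp add: mult.commute)
qed

lemma M_eq:
  assumes "real_distribution G" "integrable G (\<lambda>s. s)"
  shows "(\<integral>s\<in>{..t}. s \<partial>G) - a * cdf G t = (\<integral>s. indicator {..t} s * (s - a) \<partial>G)"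
proof -
  interpret real_distribution G by fact
  have i1: "integrable G (\<lambda>s. indicator {..t} s * s)" using intg_ind[OF assms, of t 0] by simp
  have i2: "integrable G (\<lambda>s. indicator {..t} s * a)"
    using integrable_real_mult_indicator[of "{..t}" G "\<lambda>s. a"] by (simp add: mult.commute)
  have "(\<integral>s. indicator {..t} s * (s - a) \<partial>G) = (\<integral>s. indicator {..t} s * s - indicator {..t} s * a \<partial>G)"
    by (simp add: algebra_simps)
  also have "\<dots> = (\<integral>s. indicator {..t} s * s \<partial>G) - (\<integral>s. indicator {..t} s * a \<partial>G)"
    using i1 i2 by (rule Bochner_Integration.integral_diff)
  also have "(\<integral>s. indicator {..t} s * a \<partial>G) = a * cdf G t"
    by (simp add: cdf_def)
  finally show ?thesis by (simp add: set_lebesgue_integral_def)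
qed

lemma M_mono1:
  assumes "real_distribution G" "integrable G (\<lambda>s. s)" "a \<le> t" "t \<le> t'"
  shows "(\<integral>s. indicator {..t} s * (s - a) \<partial>G) \<le> (\<integral>s. indicator {..t'} s * (s - a) \<partial>G)"
  using assms(3,4)
  by (intro integral_mono intg_ind assms(1,2)) (auto simp: indicator_def)

lemma M_mono2:
  assumes "real_distribution G" "integrable G (\<lambda>s. s)" "t \<le> t'" "t' \<le> a"
  shows "(\<integral>s. indicator {..t'} s * (s - a) \<partial>G) \<le> (\<integral>s. indicator {..t} s * (s - a) \<partial>G)"
  using assms(3,4)
  by (intro integral_mono intg_ind assms(1,2)) (auto simp: indicator_def)

lemma M_le:
  assumes "real_distribution G" "integrable G (\<lambda>s. s)"
  shows "(\<integral>s. indicator {..t} s * (s - a) \<partial>G) \<le> (t - a) * cdf G t"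
proof -
  interpret real_distribution G by fact
  have "(\<integral>s. indicator {..t} s * (s - a) \<partial>G) \<le> (\<integral>s. indicator {..t} s * (t - a) \<partial>G)"
    using integrable_real_mult_indicator[of "{..t}" G "\<lambda>s. t - a"]
    by (intro integral_mono intg_ind assms(1,2)) (auto simp: indicator_def mult.commute)
  also have "\<dots> = (t - a) * cdf G t" by (simp add: cdf_def mult.commute)
  finally show ?thesis .
qed

lemma N_zero:
  assumes "real_distribution G" "cdf G t = 0"
  shows "(\<integral>s\<in>{..t}. s \<partial>G) = 0"
proof -
  interpret real_distribution G by fact
  have "{..t} \<in> null_sets G" using assms(2)
    by (auto simp: cdf_def null_sets_def emeasure_eq_measure)
  then have "AE s in G. s \<notin> {..t}" by (rule AE_not_in)
  then have "(\<integral>s. indicator {..t} s * s \<partial>G) = (\<integral>s. 0 \<partial>G)"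
    by (intro integral_cong_AE) auto
  then show ?thesis by (simp add: set_lebesgue_integral_def)
qed

lemma cdf_set_integrable:
  assumes "real_distribution G" "integrable G (\<lambda>s. s)"
  shows "set_integrable lborel {..x} (cdf G)"
proof -
  interpret real_distribution G by fact
  interpret ps: pair_sigma_finite G lborel
    by (simp add: pair_sigma_finite_def lborel.sigma_finite_measure_axioms sigma_finite_measure_axioms)
  have mono: "mono (cdf G)" by (simp add: cdf_nondecreasing monoI)
  have meas: "cdf G \<in> borel_measurable borel" by (rule borel_measurable_mono[OF mono])
  define f :: "real \<Rightarrow> real \<Rightarrow> ennreal" where "f s t = indicator {..t} s * indicator {..x} t" for s t
  have fm: "case_prod f \<in> borel_measurable (G \<Otimes>\<^sub>M lborel)"
  proof -
    have S: "sets (G \<Otimes>\<^sub>M lborel) = sets (borel \<Otimes>\<^sub>M borel)"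
      by (intro sets_pair_measure_cong) auto
    have M2: "case_prod f \<in> borel_measurable (borel \<Otimes>\<^sub>M borel)"
    proof -
      have e: "case_prod f = indicator {p. fst p \<le> snd p \<and> snd p \<le> x}"
        unfolding f_def by (intro ext) (auto simp: indicator_def)
      have "{p::real\<times>real. fst p \<le> snd p \<and> snd p \<le> x} \<in> sets (borel \<Otimes>\<^sub>M borel)"
        unfolding borel_prod by (intro borel_closed closed_Collect_conj closed_Collect_le continuous_intros)
      then show ?thesis unfolding e by (rule borel_measurable_indicator)
    qed
    show ?thesis unfolding measurable_cong_sets[OF S refl] by (rule M2)
  qed
  have eq1: "(\<integral>\<^sup>+ t. ennreal (norm (indicator {..x} t *\<^sub>R cdf G t)) \<partial>lborel)
      = (\<integral>\<^sup>+ t. (\<integral>\<^sup>+ s. f s t \<partial>G) \<partial>lborel)"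
  proof (rule nn_integral_cong)
    fix t
    show "ennreal (norm (indicator {..x} t *\<^sub>R cdf G t)) = (\<integral>\<^sup>+ s. f s t \<partial>G)"
    proof (cases "t \<le> x")
      case True
      then have fe: "(\<lambda>s. f s t) = indicator {..t}"
        unfolding f_def by (intro ext) (simp add: indicator_def)
      have "(\<integral>\<^sup>+ s. f s t \<partial>G) = emeasure G {..t}" unfolding fe by simp
      then show ?thesis using True
        by (simp add: cdf_def emeasure_eq_measure cdf_nonneg[unfolded cdf_def])
    next
      case False
      then show ?thesis unfolding f_def by simp
    qed
  qed
  also have "\<dots> = (\<integral>\<^sup>+ s. (\<integral>\<^sup>+ t. f s t \<partial>lborel) \<partial>G)"
    by (rule ps.Fubini'[OF fm])
  also have "\<dots> \<le> (\<integral>\<^sup>+ s. ennreal (\<bar>s\<bar> + \<bar>x\<bar>) \<partial>G)"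
  proof (rule nn_integral_mono)
    fix s
    have "(\<integral>\<^sup>+ t. f s t \<partial>lborel) = (\<integral>\<^sup>+ t. indicator {s..x} t \<partial>lborel)"
      unfolding f_def by (intro nn_integral_cong) (auto simp: indicator_def)
    also have "\<dots> = emeasure lborel {s..x}" by simp
    also have "\<dots> \<le> ennreal (\<bar>s\<bar> + \<bar>x\<bar>)"
    proof (cases "s \<le> x")
      case True
      then show ?thesis using ennreal_leI[of "x - s" "\<bar>s\<bar> + \<bar>x\<bar>"] by simp
    next
      case False
      then show ?thesis by simp
    qed
    finally show "(\<integral>\<^sup>+ t. f s t \<partial>lborel) \<le> ennreal (\<bar>s\<bar> + \<bar>x\<bar>)" .
  qed
  also have "\<dots> = ennreal (\<integral>s. \<bar>s\<bar> + \<bar>x\<bar> \<partial>G)"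
    using assms(2) by (intro nn_integral_eq_integral) auto
  also have "\<dots> < \<infinity>" by simp
  finally have fin: "(\<integral>\<^sup>+ t. ennreal (norm (indicator {..x} t *\<^sub>R cdf G t)) \<partial>lborel) < \<infinity>" .
  have m2: "(\<lambda>t. indicator {..x} t *\<^sub>R cdf G t) \<in> borel_measurable lborel"
    using meas by simp
  show ?thesis unfolding set_integrable_def
    by (rule integrableI_bounded[OF m2 fin])
qed

lemma cdf_zero_exists:
  assumes F: "is_dist F" "measure F {tlo..thi} = 1" "0 \<le> tlo" and G: "mpc G F"
  shows "\<exists>x. cdf G x = 0"
proof (rule ccontr)
  assume nz: "\<not> ?thesis"
  interpret F: real_distribution F using F(1) unfolding is_dist_def real_distribution_def real_distribution_axioms_def by auto
  have Gd: "real_distribution G" using G unfolding mpc_def is_dist_def real_distribution_def real_distribution_axioms_def by auto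
  interpret G: real_distribution G by fact
  have Gi: "integrable G (\<lambda>s. s)" using G unfolding mpc_def by auto
  have pos: "cdf G x > 0" for x using nz G.cdf_nonneg[of x] by (metis less_eq_real_def)
  have cF: "cdf F t = 0" if "t < tlo" for t
  proof -
    have "cdf F t \<le> measure F (space F - {tlo..thi})"
      unfolding cdf_def using that by (intro F.finite_measure_mono) auto
    also have "\<dots> = 0" using F.prob_compl[of "{tlo..thi}"] F(2) by simp
    finally show ?thesis using F.cdf_nonneg[of t] by linarith
  qed
  have z: "(\<lambda>t. indicator {..-1} t *\<^sub>R cdf F t) = (\<lambda>t. 0)"
    using cF F(3) by (force simp: indicator_def fun_eq_iff)
  have "(\<integral>t\<in>{..-1}. cdf F t \<partial>lborel) = 0"
    unfolding set_lebesgue_integral_def z by simp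
  then have le: "(\<integral>t\<in>{..-1}. cdf G t \<partial>lborel) \<le> 0"
    using G unfolding mpc_def by metis
  have "(\<integral>t. indicator {-2..-1::real} t * cdf G (-2) \<partial>lborel) \<le> (\<integral>t\<in>{..-1}. cdf G t \<partial>lborel)"
    unfolding set_lebesgue_integral_def
  proof (rule integral_mono)
    show "integrable lborel (\<lambda>t. indicator {-2..-1::real} t * cdf G (-2))"
      using borel_integrable_atLeastAtMost'[of "-2" "-1" "\<lambda>t. cdf G (-2)"]
      unfolding set_integrable_def by simp
    show "integrable lborel (\<lambda>t. indicator {..-1} t *\<^sub>R cdf G t)"
      using cdf_set_integrable[OF Gd Gi, of "-1"] unfolding set_integrable_def .
    fix t show "indicator {-2..-1::real} t * cdf G (-2) \<le> indicator {..-1} t *\<^sub>R cdf G t"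
      using G.cdf_nondecreasing[of "-2" t] G.cdf_nonneg[of t] by (auto simp: indicator_def)
  qed
  moreover have "(\<integral>t. indicator {-2..-1::real} t * cdf G (-2) \<partial>lborel) = cdf G (-2)"
    by simp
  ultimately show False using pos[of "-2"] le by linarith
qed

lemma P_mono:
  assumes "real_distribution G" "integrable G (\<lambda>s. s)" "c \<le> d"
  shows "(\<integral>s\<in>{m + d..thi}. (s - (m + d)) \<partial>G) \<le> (\<integral>s\<in>{m + c..thi}. (s - (m + c)) \<partial>G)"
proof -
  interpret real_distribution G by fact
  have i: "integrable G (\<lambda>s. indicator {m + a..thi} s *\<^sub>R (s - (m + a)))" for a
    using assms(2) by (intro integrable_mult_indicator) auto
  show ?thesis unfolding set_lebesgue_integral_def
    by (intro integral_mono i) (use assms(3) in \<open>auto simp: indicator_def\<close>)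
qed

theorem lemma7:
  fixes F G :: "real measure" and tlo thi phit phid tau :: real
  assumes F: "is_dist F" and supp: "measure F {tlo..thi} = 1"
    and bounds: "0 \<le> tlo" "tlo < thi"
    and G: "mpc G F"
    and wP: "cond_wP (mean F) thi G phit phid"
    and wHE: "cond_wHE G phid tau"
  shows "\<exists>(Gs :: nat \<Rightarrow> real measure) phits phids taus L.
           (\<forall>n. mpc (Gs n) F \<and> cond_P (mean F) thi (Gs n) (phits n) (phids n)
                  \<and> cond_HE (Gs n) (phids n) (taus n))
         \<and> weak_conv_m Gs G \<and> phits \<longlonglongrightarrow> phit \<and> phids \<longlonglongrightarrow> phid
         \<and> (\<lambda>n. Rhat (Gs n) (phits n) (phids n) (taus n)) \<longlonglongrightarrow> L
         \<and> Rhat G phit phid tau \<le> L"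
proof -
  have Gd: "real_distribution G" using G unfolding mpc_def is_dist_def real_distribution_def real_distribution_axioms_def by auto
  interpret G: real_distribution G by fact
  have Gi: "integrable G (\<lambda>s. s)" using G unfolding mpc_def by auto
  obtain x0 where x0: "cdf G x0 = 0" using cdf_zero_exists[OF F supp bounds(1) G] by blast
  define P where "P = {x. cdf G x > 0}"
  have bddP: "bdd_below P"
  proof
    fix x assume "x \<in> P"
    then show "x0 \<le> x" using G.cdf_nondecreasing[of x x0] x0 unfolding P_def by force
  qed
  have neP: "P \<noteq> {}"
  proof -
    have "eventually (\<lambda>i. cdf G (real i) > 0) sequentially"
      using order_tendstoD(1)[OF G.cdf_lim_infty_prob, of 0] by simp
    then obtain i where "cdf G (real i) > 0" by (auto simp: eventually_sequentially)
    then show ?thesis unfolding P_def by auto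
  qed
  have ls_le: "low_supp G \<le> t" if "cdf G t > 0" for t
    unfolding low_supp_def using that bddP by (intro cInf_lower) (auto simp: P_def)
  have pos_above: "cdf G t > 0" if "low_supp G < t" for t
  proof -
    from that have "Inf P < t" unfolding low_supp_def P_def by simp
    then obtain x where "x \<in> P" "x < t" using cInf_less_iff[OF neP bddP] by auto
    then show ?thesis using G.cdf_nondecreasing[of x t] unfolding P_def by auto
  qed
  define N where "N t = (\<integral>s\<in>{..t}. s \<partial>G)" for t
  have Meq: "N t - a * cdf G t = (\<integral>s. indicator {..t} s * (s - a) \<partial>G)" for t a
    unfolding N_def by (rule M_eq[OF Gd Gi])
  have Nle: "N t \<le> t * cdf G t" for t
    using M_le[OF Gd Gi, of t t] Meq[of t t] by simp
  have Nz: "cdf G t = 0 \<Longrightarrow> N t = 0" for t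
    unfolding N_def by (rule N_zero[OF Gd])
  have cm: "cond_mean_below G t = N t / cdf G t" if "cdf G t > 0" for t
    using that unfolding cond_mean_below_def N_def by simp
  have K: "N t - t * cdf G t \<le> N t' - t * cdf G t'" if "t \<le> t'" for t t'
    using M_mono1[OF Gd Gi, of t t t'] that Meq[of t t] Meq[of t' t] by simp
  have K2: "N t' - t' * cdf G t' \<le> N t - t' * cdf G t" if "t \<le> t'" for t t'
    using M_mono2[OF Gd Gi, of t t' t'] that Meq[of t t'] Meq[of t' t'] by simp
  have wHE1: "low_supp G \<le> tau" and wHE2: "tau - phid = cond_mean_below G tau"
    and wHE3: "\<And>t. t > tau \<Longrightarrow> t - phid \<ge> cond_mean_below G t"
    using wHE unfolding cond_wHE_def by auto
  have phid_nn: "phid \<ge> 0"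
  proof (cases "cdf G tau > 0")
    case True
    then have "N tau / cdf G tau \<le> tau" using Nle[of tau] by (simp add: divide_le_eq)
    then show ?thesis using wHE2 cm[OF True] by simp
  next
    case False
    then show ?thesis using wHE1 wHE2 by (simp add: cond_mean_below_def)
  qed
  define e where "e n = inverse (real (Suc n))" for n
  have e_pos: "0 < e n" and e_le1: "e n \<le> 1" for n unfolding e_def by (auto simp: field_simps)
  have e_lim: "e \<longlonglongrightarrow> 0" unfolding e_def by (rule LIMSEQ_inverse_real_of_nat)
  have e_mono: "e m \<le> e n" if "n \<le> m" for n m
    unfolding e_def using that by (simp add: le_imp_inverse_le)
  have Pc: "cond_P (mean F) thi G (phit - e n) c" if "c \<le> phid" for c n
    using wP P_mono[OF Gd Gi that, of "mean F" thi] e_pos[of n]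
    unfolding cond_P_def cond_wP_def by linarith
  have phits_lim: "(\<lambda>n. phit - e n) \<longlonglongrightarrow> phit"
    using tendsto_diff[OF tendsto_const e_lim, of phit] by simp
  have wc: "weak_conv_m (\<lambda>n. G) G" unfolding weak_conv_m_def weak_conv_def by simp
  show ?thesis
  proof (cases "phid = 0")
    case True
    define ls where "ls = low_supp G"
    have below0: "cdf G t = 0" if "t < ls" for t
      using ls_le[of t] that G.cdf_nonneg[of t] unfolding ls_def by force
    have eq0: "ls = cond_mean_below G ls"
    proof (cases "cdf G ls > 0")
      case True
      have "ls * cdf G ls \<le> N ls"
      proof (rule dense_le)
        fix y assume y: "y < ls * cdf G ls"
        define t where "t = y / cdf G ls"
        have tl: "t < ls" unfolding t_def using y True by (simp add: divide_less_eq)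
        have "N t - t * cdf G t \<le> N ls - t * cdf G ls" using K[of t ls] tl by simp
        moreover have "N t = 0" "cdf G t = 0" using Nz below0[OF tl] by auto
        moreover have "t * cdf G ls = y" unfolding t_def using True by simp
        ultimately show "y \<le> N ls" by simp
      qed
      then have "N ls = ls * cdf G ls" using Nle[of ls] by simp
      then show ?thesis using cm[OF True] True by simp
    next
      case False
      then show ?thesis unfolding cond_mean_below_def ls_def by simp
    qed
    have gt0: "t - 0 > cond_mean_below G t" if "t > ls" for t
    proof -
      define t2 where "t2 = (ls + t) / 2"
      have t2: "ls < t2" "t2 < t" using that unfolding t2_def by auto
      have p2: "cdf G t2 > 0" using pos_above t2 unfolding ls_def by simp
      have pt: "cdf G t > 0" using pos_above that unfolding ls_def by simp
      have "N t - t * cdf G t \<le> N t2 - t * cdf G t2" using K2[of t2 t] t2 by simp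
      also have "N t2 - t * cdf G t2 \<le> (t2 - t) * cdf G t2" using Nle[of t2] by (simp add: algebra_simps)
      also have "\<dots> < 0" using t2 p2 by (simp add: mult_neg_pos)
      finally have "N t < t * cdf G t" by simp
      then show ?thesis using cm[OF pt] pt by (simp add: divide_less_eq)
    qed
    have HE0: "cond_HE G 0 ls"
      unfolding cond_HE_def using eq0 gt0 by (simp add: ls_def)
    show ?thesis
      apply (rule exI[of _ "\<lambda>n. G"], rule exI[of _ "\<lambda>n. phit - e n"], rule exI[of _ "\<lambda>n. 0"],
          rule exI[of _ "\<lambda>n. ls"], rule exI[of _ phit])
      using G Pc[of 0] HE0 wc phits_lim True by (simp add: Rhat_def)
  next
    case False
    then have phid_pos: "phid > 0" using phid_nn by simp
    define \<Phi> where "\<Phi> c t = (t - c) * cdf G t - N t" for c t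
    define S where "S c = {t. \<Phi> c t \<le> 0}" for c
    define T where "T c = Sup (S c)" for c
    have L1: "\<Phi> c t' \<le> \<Phi> c t + (t' - t) * cdf G t' - c * (cdf G t' - cdf G t)" if "t \<le> t'" for c t t'
      using K[OF that] unfolding \<Phi>_def by (simp add: algebra_simps)
    have x0S: "x0 \<in> S c" for c unfolding S_def \<Phi>_def using x0 Nz[OF x0] by simp
    have neS: "S c \<noteq> {}" for c using x0S by auto
    have S_bd: "t \<le> tau" if "t \<in> S c" "c < phid" for t c
    proof (rule ccontr)
      assume "\<not> t \<le> tau"
      then have tt: "t > tau" by simp
      have pt: "cdf G t > 0" using pos_above wHE1 tt by simp
      have "N t / cdf G t \<le> t - phid" using wHE3[OF tt] cm[OF pt] by simp
      then have "N t \<le> (t - phid) * cdf G t" using pt by (simp add: divide_le_eq)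
      also have "\<dots> < (t - c) * cdf G t" using pt that(2) by (simp add: mult_strict_right_mono)
      finally have "\<Phi> c t > 0" unfolding \<Phi>_def by simp
      then show False using that(1) unfolding S_def by simp
    qed
    have bddS: "bdd_above (S c)" if "c < phid" for c
      using S_bd[OF _ that] by (intro bdd_aboveI[of _ tau]) auto
    have Tle: "T c \<le> tau" if "c < phid" for c
      unfolding T_def using S_bd[OF _ that] neS by (intro cSup_least) auto
    have notS: "\<Phi> c t' > 0" if "t' > T c" "c < phid" for c t'
    proof (rule ccontr)
      assume "\<not> \<Phi> c t' > 0"
      then have "t' \<in> S c" unfolding S_def by simp
      then have "t' \<le> T c" unfolding T_def using bddS[OF that(2)] by (rule cSup_upper)
      then show False using that(1) by simp
    qed
    have Tmono: "T c \<le> T c'" if "0 < c" "c \<le> c'" "c' < phid" for c c'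
    proof -
      have "S c \<subseteq> S c'"
      proof
        fix t assume "t \<in> S c"
        moreover have "\<Phi> c' t \<le> \<Phi> c t" unfolding \<Phi>_def using that G.cdf_nonneg[of t]
          by (simp add: algebra_simps mult_right_mono)
        ultimately show "t \<in> S c'" unfolding S_def by simp
      qed
      then show ?thesis unfolding T_def using neS bddS[OF that(3)] by (intro cSup_subset_mono) auto
    qed
    have HEc: "cond_HE G c (T c)" if c: "0 < c" "c < phid" for c
    proof -
      let ?T = "T c"
      have Phi_le: "\<Phi> c ?T \<le> 0"
      proof (rule ccontr)
        assume "\<not> \<Phi> c ?T \<le> 0"
        then have ep: "\<Phi> c ?T > 0" by simp
        have "?T - \<Phi> c ?T < Sup (S c)" using ep unfolding T_def by simp
        then obtain t where t: "t \<in> S c" "?T - \<Phi> c ?T < t"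
          using less_cSup_iff[OF neS bddS[OF c(2)]] by auto
        have tT: "t \<le> ?T" unfolding T_def using t(1) bddS[OF c(2)] by (rule cSup_upper)
        have a: "(?T - t) * cdf G ?T \<le> ?T - t" using tT G.cdf_bounded_prob[of ?T] by (simp add: mult_left_le)
        have b: "c * (cdf G ?T - cdf G t) \<ge> 0" using c G.cdf_nondecreasing[OF tT] by simp
        have "\<Phi> c t \<le> 0" using t(1) unfolding S_def by simp
        then show False using L1[OF tT, of c] a b t(2) by linarith
      qed
      have GT: "cdf G ?T > 0"
      proof (rule ccontr)
        assume "\<not> cdf G ?T > 0"
        then have z: "cdf G ?T = 0" using G.cdf_nonneg[of ?T] by simp
        have "\<Phi> c ?T = 0" unfolding \<Phi>_def using z Nz[OF z] by simp
        moreover have "\<Phi> c (?T + c) > 0" using notS c by simp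
        moreover have "\<Phi> c (?T + c) \<le> \<Phi> c ?T + c * cdf G (?T + c) - c * (cdf G (?T + c) - 0)"
          using L1[of ?T "?T + c" c] c z by simp
        ultimately show False by simp
      qed
      have Phi_ge: "\<Phi> c ?T \<ge> 0"
      proof (rule ccontr)
        assume "\<not> \<Phi> c ?T \<ge> 0"
        then have neg: "\<Phi> c ?T < 0" by simp
        define d where "d = - \<Phi> c ?T / 2"
        have d: "d > 0" using neg unfolding d_def by simp
        have "\<Phi> c (?T + d) > 0" using notS c d by simp
        moreover have "\<Phi> c (?T + d) \<le> \<Phi> c ?T + d * cdf G (?T + d) - c * (cdf G (?T + d) - cdf G ?T)"
          using L1[of ?T "?T + d" c] d by simp
        moreover have "d * cdf G (?T + d) \<le> d" using d G.cdf_bounded_prob[of "?T + d"] by (simp add: mult_left_le)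
        moreover have "c * (cdf G (?T + d) - cdf G ?T) \<ge> 0" using c G.cdf_nondecreasing[of ?T "?T + d"] d by simp
        ultimately show False using neg d_def by linarith
      qed
      have Phi0: "\<Phi> c ?T = 0" using Phi_le Phi_ge by simp
      have "(?T - c) * cdf G ?T = N ?T" using Phi0 unfolding \<Phi>_def by simp
      then have h1: "?T - c = cond_mean_below G ?T"
        unfolding cm[OF GT] using GT by (simp add: eq_divide_eq)
      have h2: "t' - c > cond_mean_below G t'" if "t' > ?T" for t'
      proof -
        have pt: "cdf G t' > 0" using GT G.cdf_nondecreasing[of ?T t'] that by simp
        have "\<Phi> c t' > 0" using notS that c by simp
        then show ?thesis using cm[OF pt] pt unfolding \<Phi>_def by (simp add: divide_less_eq)
      qed
      show ?thesis unfolding cond_HE_def using ls_le[OF GT] h1 h2 by simp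
    qed
    define c where "c n = phid * (1 - e n / 2)" for n
    have c_pos: "0 < c n" and c_lt: "c n < phid" for n
      unfolding c_def using phid_pos e_pos[of n] e_le1[of n] by (auto simp: mult_less_cancel_left1)
    have c_mono: "c n \<le> c m" if "n \<le> m" for n m
      unfolding c_def using phid_pos e_mono[OF that] by (simp add: mult_left_mono)
    have c_lim: "c \<longlonglongrightarrow> phid"
    proof -
      have "(\<lambda>n. phid * (1 - e n / 2)) \<longlonglongrightarrow> phid * (1 - 0 / 2)"
        by (intro tendsto_intros e_lim) auto
      then show ?thesis unfolding c_def by simp
    qed
    define g where "g n = cdf G (T (c n))" for n
    have g_inc: "incseq g" unfolding g_def
      by (intro monoI G.cdf_nondecreasing Tmono c_pos c_mono c_lt)
    have g_bdd: "bdd_above (range g)" unfolding g_def using G.cdf_bounded_prob by (intro bdd_aboveI[of _ 1]) auto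
    have g_lim: "g \<longlonglongrightarrow> (SUP i. g i)" by (rule LIMSEQ_incseq_SUP[OF g_bdd g_inc])
    have g_le: "(SUP i. g i) \<le> cdf G tau"
      unfolding g_def by (intro cSUP_least G.cdf_nondecreasing Tle c_lt) auto
    define L where "L = phit + phid * (1 - (SUP i. g i))"
    have R_lim: "(\<lambda>n. Rhat G (phit - e n) (c n) (T (c n))) \<longlonglongrightarrow> L"
    proof -
      have "(\<lambda>n. (phit - e n) + c n * (1 - g n)) \<longlonglongrightarrow> (phit - 0) + phid * (1 - (SUP i. g i))"
        by (intro tendsto_intros e_lim c_lim g_lim)
      then show ?thesis unfolding Rhat_def g_def L_def by simp
    qed
    have R_le: "Rhat G phit phid tau \<le> L"
      unfolding Rhat_def L_def using g_le phid_pos by (simp add: mult_left_mono)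
    show ?thesis
      apply (rule exI[of _ "\<lambda>n. G"], rule exI[of _ "\<lambda>n. phit - e n"], rule exI[of _ c],
          rule exI[of _ "\<lambda>n. T (c n)"], rule exI[of _ L])
      using G Pc[OF less_imp_le[OF c_lt]] HEc[OF c_pos c_lt] wc phits_lim c_lim R_lim R_le by simp
  qed
qed

end
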